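(* Let $k\ge2$, let $M$ be a $k$-permutable monoid and let $L\in\mathfrak{L}_{Rat}(M)$. Then there exists a positive integer $m$ such that for every word $w\in L$ with $|w|\ge m$ and every factorization $w=w_1w_2\cdots w_m$ with $|w_i|\ge 1$ for $1\le i\le m$, there exist integers $0\le i_0<i_1<\cdots<i_k<i_{k+1}\le m$ such that $w=\lambda W_1W_2\cdots W_k\mu$, where $\lambda=w_1\cdots w_{i_0}$ (empty if $i_0=0$), $\mu=w_{i_{k+1}}\cdots w_m$ (empty if $i_{k+1}=m$), and $W_j=w_{1+i_{j-1}}\cdots w_{i_j}$ for $j=1,\dots,k$, and there is a permutation $\sigma$ of $\{1,\dots,k\}$, different from the identity, such that the word $\lambda W_{\sigma(1)}W_{\sigma(2)}\cdots W_{\sigma(k)}\mu$ belongs to $L$.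
   Context: A monoid $M$ is $k$-permutable if for all $s_1,\dots,s_k\in M$ there is a permutation $\sigma\neq\mathrm{id}$ of $\{1,\dots,k\}$ with $s_1\cdots s_k=s_{\sigma(1)}\cdots s_{\sigma(k)}$. An $M$-automaton is a tuple $(Q,\Sigma,M,\delta,q_0,Q_a)$ with finite state set, input alphabet $\Sigma$, initial state $q_0$, accept states $Q_a$, and $\delta: Q\times(\Sigma\cup\{\varepsilon\})\to\mathbb{P}(Q\times M)$ finite-valued; $(q',m)\in\delta(q,\sigma)$ means reading $\sigma$ in state $q$ it may go to $q'$ and multiply the register on the right by $m$. A rational monoid automaton over $M$ is an $M$-automaton with rational subsets $I_0,I_1\subseteq M$ (closure of finite subsets under union, product, Kleene star); $w$ is accepted if some computation reading $w$ from $q_0$ to an accept state has register product $x$ with $x_0x\in I_1$ for some $x_0\in I_0$. $\mathfrak{L}_{Rat}(M)$ is the family of languages so accepted. *)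

theory Defs
  imports "HOL-Combinatorics.Permutations"
begin

definition k_permutable :: "nat \<Rightarrow> 'm::monoid_mult itself \<Rightarrow> bool" where
  "k_permutable k _ \<longleftrightarrow>
     (\<forall>s :: nat \<Rightarrow> 'm. \<exists>\<sigma>. \<sigma> permutes {1..k} \<and> \<sigma> \<noteq> id \<and>
        prod_list (map s [1..<k+1]) = prod_list (map (s \<circ> \<sigma>) [1..<k+1]))"

definition set_prod :: "'m::monoid_mult set \<Rightarrow> 'm set \<Rightarrow> 'm set" where
  "set_prod A B = {a * b | a b. a \<in> A \<and> b \<in> B}"

definition set_star :: "'m::monoid_mult set \<Rightarrow> 'm set" where
  "set_star A = {prod_list xs | xs. xs \<in> lists A}"

inductive_set rat_subsets :: "'m::monoid_mult set set" where
  fin: "finite A \<Longrightarrow> A \<in> rat_subsets"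
| un: "A \<in> rat_subsets \<Longrightarrow> B \<in> rat_subsets \<Longrightarrow> A \<union> B \<in> rat_subsets"
| prod: "A \<in> rat_subsets \<Longrightarrow> B \<in> rat_subsets \<Longrightarrow> set_prod A B \<in> rat_subsets"
| star: "A \<in> rat_subsets \<Longrightarrow> set_star A \<in> rat_subsets"

text \<open>M-automata. Transition function: delta q None is the epsilon move,
  delta q (Some a) reads letter a; a pair (q', m) means go to q' and multiply
  the register on the right by m.\<close>

definition is_M_automaton ::
  "'q set \<Rightarrow> 'a set \<Rightarrow> ('q \<Rightarrow> 'a option \<Rightarrow> ('q \<times> 'm) set) \<Rightarrow> 'q \<Rightarrow> 'q set \<Rightarrow> bool" where
  "is_M_automaton Q Sig delta q0 Qa \<longleftrightarrow>
     finite Q \<and> finite Sig \<and> q0 \<in> Q \<and> Qa \<subseteq> Q \<and>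
     (\<forall>q \<in> Q. \<forall>a. finite (delta q a) \<and> fst ` delta q a \<subseteq> Q) \<and>
     (\<forall>q \<in> Q. \<forall>a. a \<notin> Sig \<longrightarrow> delta q (Some a) = {})"

inductive run_M :: "('q \<Rightarrow> 'a option \<Rightarrow> ('q \<times> 'm::monoid_mult) set) \<Rightarrow> 'q \<Rightarrow> 'a list \<Rightarrow> 'm \<Rightarrow> 'q \<Rightarrow> bool"
  for delta where
  nil: "run_M delta q [] 1 q"
| read: "(q', m) \<in> delta q (Some a) \<Longrightarrow> run_M delta q' w x q'' \<Longrightarrow> run_M delta q (a # w) (m * x) q''"
| eps: "(q', m) \<in> delta q None \<Longrightarrow> run_M delta q' w x q'' \<Longrightarrow> run_M delta q w (m * x) q''"

definition rat_lang ::
  "'q set \<Rightarrow> 'a set \<Rightarrow> ('q \<Rightarrow> 'a option \<Rightarrow> ('q \<times> 'm::monoid_mult) set) \<Rightarrow> 'q \<Rightarrow> 'q set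
     \<Rightarrow> 'm set \<Rightarrow> 'm set \<Rightarrow> 'a list set" where
  "rat_lang Q Sig delta q0 Qa I0 I1 =
     {w \<in> lists Sig. \<exists>q x x0. q \<in> Qa \<and> run_M delta q0 w x q \<and> x0 \<in> I0 \<and> x0 * x \<in> I1}"

text \<open>The family L_Rat(M) (state sets taken, w.l.o.g., as finite sets of naturals).\<close>

definition LRat :: "'m::monoid_mult itself \<Rightarrow> 'a list set set" where
  "LRat _ = {L. \<exists>(Q :: nat set) (Sig :: 'a set) (delta :: nat \<Rightarrow> 'a option \<Rightarrow> (nat \<times> 'm) set)
                 q0 Qa (I0 :: 'm set) I1.
       is_M_automaton Q Sig delta q0 Qa \<and> I0 \<in> rat_subsets \<and> I1 \<in> rat_subsets \<and>
       L = rat_lang Q Sig delta q0 Qa I0 I1}"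

end

theory Submission
  imports Defs
begin

lemma run_append:
  "run_M d q u x1 q' \<Longrightarrow> run_M d q' v x2 q'' \<Longrightarrow> run_M d q (u@v) (x1*x2) q''"
proof (induction rule: run_M.induct)
  case (nil q) then show ?case by simp
next
  case (read q' m q a w x q1)
  have "run_M d q (a # (w @ v)) (m * (x * x2)) q''"
    using run_M.read[OF read.hyps(1) read.IH[OF read.prems]] .
  then show ?case by (simp add: mult.assoc)
next
  case (eps q' m q w x q1)
  have "run_M d q (w @ v) (m * (x * x2)) q''"
    using run_M.eps[OF eps.hyps(1) eps.IH[OF eps.prems]] .
  then show ?case by (simp add: mult.assoc)
qed

lemma run_split:
  "run_M d q w x q'' \<Longrightarrow> w = u@v \<Longrightarrow> \<exists>q' x1 x2. run_M d q u x1 q' \<and> run_M d q' v x2 q'' \<and> x = x1*x2"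
proof (induction arbitrary: u rule: run_M.induct)
  case (nil q) then have "u = []" "v = []" by auto
  then show ?case using run_M.nil[of d q] by (intro exI[of _ q] exI[of _ 1]) simp
next
  case (read q' m q a w x q1)
  show ?case
  proof (cases u)
    case Nil
    then have "v = a # w" using read.prems by simp
    then show ?thesis using run_M.nil[of d q] run_M.read[OF read.hyps(1) read.hyps(2)] Nil
      by (intro exI[of _ q] exI[of _ 1] exI[of _ "m*x"]) simp
  next
    case (Cons b u')
    with read.prems have "b = a" "w = u' @ v" by auto
    with read.IH obtain q2 x1 x2 where "run_M d q' u' x1 q2" "run_M d q2 v x2 q1" "x = x1*x2" by blast
    then show ?thesis using read.hyps(1) Cons \<open>b = a\<close>
    proof -
      have "run_M d q (a # u') (m * x1) q2" using run_M.read[OF read.hyps(1) \<open>run_M d q' u' x1 q2\<close>] .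
      then show ?thesis using \<open>run_M d q2 v x2 q1\<close> \<open>x = x1*x2\<close> Cons \<open>b = a\<close>
        by (intro exI[of _ q2] exI[of _ "m*x1"] exI[of _ x2]) (simp add: mult.assoc)
    qed
  qed
next
  case (eps q' m q w x q1)
  then obtain q2 x1 x2 where "run_M d q' u x1 q2" "run_M d q2 v x2 q1" "x = x1*x2" by blast
  moreover have "run_M d q u (m * x1) q2" using run_M.eps[OF eps.hyps(1) \<open>run_M d q' u x1 q2\<close>] .
  ultimately show ?case by (intro exI[of _ q2] exI[of _ "m*x1"] exI[of _ x2]) (simp add: mult.assoc)
qed

lemma run_concat_decomp:
  "ws \<noteq> [] \<Longrightarrow> run_M d q (concat ws) x q' \<Longrightarrow> \<exists>st xs. st 0 = q \<and> st (length ws) = q' \<and>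
     (\<forall>j<length ws. run_M d (st j) (ws!j) (xs j) (st (Suc j))) \<and> x = prod_list (map xs [0..<length ws])"
proof (induction ws arbitrary: q x)
  case Nil then show ?case by simp
next
  case (Cons u ws)
  show ?case
  proof (cases "ws = []")
    case True
    then show ?thesis using Cons.prems
      by (intro exI[of _ "\<lambda>j. if j = 0 then q else q'"] exI[of _ "\<lambda>_. x"]) auto
  next
    case False
    from Cons.prems obtain q1 x1 x2 where r: "run_M d q u x1 q1" "run_M d q1 (concat ws) x2 q'" "x = x1*x2"
      using run_split[OF Cons.prems(2), of u "concat ws"] by auto
    from Cons.IH[OF False r(2)] obtain st xs where h: "st 0 = q1" "st (length ws) = q'"
      "\<forall>j<length ws. run_M d (st j) (ws!j) (xs j) (st (Suc j))" "x2 = prod_list (map xs [0..<length ws])" by blast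
    define st' where "st' j = (if j = 0 then q else st (j - 1))" for j
    define xs' where "xs' j = (if j = 0 then x1 else xs (j - 1))" for j
    have "prod_list (map xs' [0..<length (u#ws)]) = x1 * prod_list (map xs [0..<length ws])"
    proof -
      have "[0..<length (u#ws)] = 0 # map Suc [0..<length ws]"
        by (simp only: length_Cons map_Suc_upt upt_conv_Cons[OF zero_less_Suc])
      then show ?thesis by (simp add: xs'_def comp_def)
    qed
    moreover have "\<forall>j<length (u#ws). run_M d (st' j) ((u#ws)!j) (xs' j) (st' (Suc j))"
    proof (intro allI impI)
      fix j assume "j < length (u#ws)"
      then show "run_M d (st' j) ((u#ws)!j) (xs' j) (st' (Suc j))"
        using h r by (cases j) (auto simp: st'_def xs'_def)
    qed
    ultimately show ?thesis using h r
      by (intro exI[of _ st'] exI[of _ xs']) (auto simp: st'_def)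
  qed
qed

lemma run_in_Q:
  assumes "\<forall>q \<in> Q. \<forall>a. fst ` d q a \<subseteq> Q"
  shows "run_M d q w x q' \<Longrightarrow> q \<in> Q \<Longrightarrow> q' \<in> Q"
proof (induction rule: run_M.induct)
  case (nil q) then show ?case .
next
  case (read q' m q a w x q'')
  then have "q' \<in> Q" using assms by (metis fst_conv image_eqI subsetD)
  then show ?case using read.IH by blast
next
  case (eps q' m q w x q'')
  then have "q' \<in> Q" using assms by (metis fst_conv image_eqI subsetD)
  then show ?case using eps.IH by blast
qed

lemma run_loops:
  "(\<forall>j\<in>set js. run_M d q (W j) (y j) q) \<Longrightarrow> run_M d q (concat (map W js)) (prod_list (map y js)) q"
proof (induction js)
  case Nil then show ?case using run_M.nil[of d q] by simp
next
  case (Cons j js)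
  then have "run_M d q (W j) (y j) q" "run_M d q (concat (map W js)) (prod_list (map y js)) q" by auto
  from run_append[OF this] show ?case by simp
qed

lemma let3I:
  assumes "a = a'" "b = b'" "c = c'" "P a' b' c'"
  shows "let x = a; y = b; z = c in P x y z"
  using assms by simp

theorem lemma2:
  fixes k :: nat and L :: "'a list set"
  assumes "k \<ge> 2"
    and "k_permutable k TYPE('m::monoid_mult)"
    and "L \<in> LRat TYPE('m)"
  shows "\<exists>m::nat. m > 0 \<and>
    (\<forall>w \<in> L. \<forall>ws :: 'a list list.
       length w \<ge> m \<and> length ws = m \<and> (\<forall>u \<in> set ws. u \<noteq> []) \<and> concat ws = w \<longrightarrow>
       (\<exists>i :: nat \<Rightarrow> nat. (\<forall>j < k. i j < i (Suc j)) \<and> i k \<le> m \<and>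
          (let lam = concat (take (i 0) ws);
               W = (\<lambda>j. concat (take (i j - i (j - 1)) (drop (i (j - 1)) ws)));
               mu = concat (drop (i k) ws)
           in w = lam @ concat (map W [1..<k+1]) @ mu \<and>
              (\<exists>\<sigma>. \<sigma> permutes {1..k} \<and> \<sigma> \<noteq> id \<and>
                   lam @ concat (map (W \<circ> \<sigma>) [1..<k+1]) @ mu \<in> L))))"
proof -
  from assms(3) obtain Q :: "nat set" and Sig :: "'a set" and delta :: "nat \<Rightarrow> 'a option \<Rightarrow> (nat \<times> 'm) set"
    and q0 Qa I0 I1 where A: "is_M_automaton Q Sig delta q0 Qa" and LL: "L = rat_lang Q Sig delta q0 Qa I0 I1"
    unfolding LRat_def by blast
  have finQ: "finite Q" and q0Q: "q0 \<in> Q" and clos: "\<forall>q \<in> Q. \<forall>a. fst ` delta q a \<subseteq> Q"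
    using A unfolding is_M_automaton_def by auto
  define n where "n = card Q"
  define m where "m = n * k + 1"
  have HH: "\<forall>w \<in> L. \<forall>ws :: 'a list list.
       length w \<ge> m \<and> length ws = m \<and> (\<forall>u \<in> set ws. u \<noteq> []) \<and> concat ws = w \<longrightarrow>
       (\<exists>i :: nat \<Rightarrow> nat. (\<forall>j < k. i j < i (Suc j)) \<and> i k \<le> m \<and>
          (let lam = concat (take (i 0) ws);
               W = (\<lambda>j. concat (take (i j - i (j - 1)) (drop (i (j - 1)) ws)));
               mu = concat (drop (i k) ws)
           in w = lam @ concat (map W [1..<k+1]) @ mu \<and>
              (\<exists>\<sigma>. \<sigma> permutes {1..k} \<and> \<sigma> \<noteq> id \<and>
                   lam @ concat (map (W \<circ> \<sigma>) [1..<k+1]) @ mu \<in> L)))"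
  proof (intro ballI allI impI)
    fix w ws assume wL: "w \<in> L" and H: "length w \<ge> m \<and> length ws = m \<and> (\<forall>u \<in> set ws. u \<noteq> []) \<and> concat ws = w"
    have lws: "length ws = m" and wdef: "w = concat ws" using H by auto
    from wL obtain qf x x0 where wS: "w \<in> lists Sig" and qf: "qf \<in> Qa" and rw: "run_M delta q0 w x qf"
      and x0: "x0 \<in> I0" "x0 * x \<in> I1" unfolding LL rat_lang_def by blast
    have "ws \<noteq> []" using lws m_def by auto
    then obtain st xs where st0: "st 0 = q0" and stm: "st m = qf"
      and stp: "\<forall>j<m. run_M delta (st j) (ws!j) (xs j) (st (Suc j))" and xdef: "x = prod_list (map xs [0..<m])"
      using run_concat_decomp[of ws delta q0 x qf] rw wdef lws by auto
    have stQ: "j \<le> m \<Longrightarrow> st j \<in> Q" for j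
    proof (induction j)
      case 0 then show ?case using st0 q0Q by simp
    next
      case (Suc j)
      then have jm: "j < m" by simp
      then have "st j \<in> Q" using Suc.IH by simp
      moreover have "run_M delta (st j) (ws!j) (xs j) (st (Suc j))" using stp jm by blast
      ultimately show ?case using run_in_Q[OF clos] by blast
    qed
    define S where "S qq = {j \<in> {0..m}. st j = qq}" for qq
    have "\<exists>qq. card (S qq) \<ge> Suc k"
    proof (rule ccontr)
      assume "\<not> (\<exists>qq. card (S qq) \<ge> Suc k)"
      then have le: "\<forall>qq\<in>Q. card (S qq) \<le> k" by (simp add: not_less_eq_eq)
      have "{0..m} \<subseteq> (\<Union>qq\<in>Q. S qq)" using stQ by (auto simp: S_def)
      then have "card {0..m} \<le> card (\<Union>qq\<in>Q. S qq)"
        by (intro card_mono) (auto simp: S_def finQ)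
      also have "\<dots> \<le> (\<Sum>qq\<in>Q. card (S qq))" using card_UN_le[OF finQ] by blast
      also have "\<dots> \<le> card Q * k" using sum_bounded_above[of Q "\<lambda>qq. card (S qq)" k] le by simp
      finally show False by (simp add: m_def n_def)
    qed
    then obtain qq where cS: "card (S qq) \<ge> Suc k" by blast
    define l where "l = sorted_list_of_set (S qq)"
    have finS: "finite (S qq)" by (simp add: S_def)
    have ll: "length l = card (S qq)" and sl: "set l = S qq" and srt: "sorted_wrt (<) l" and srt2: "sorted l"
      using finS by (auto simp: l_def)
    define i where "i j = l ! j" for j
    have inc: "\<forall>j < k. i j < i (Suc j)"
    proof (intro allI impI)
      fix j assume "j < k"
      then show "i j < i (Suc j)" unfolding i_def using sorted_wrt_nth_less[OF srt, of j "Suc j"] ll cS by simp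
    qed
    have iS: "j \<le> k \<Longrightarrow> i j \<le> m \<and> st (i j) = qq" for j
    proof -
      assume "j \<le> k"
      then have "j < length l" using ll cS by simp
      then have "i j \<in> S qq" unfolding i_def sl[symmetric] by (rule nth_mem)
      then show ?thesis by (auto simp: S_def)
    qed
    have mono: "j \<le> j' \<Longrightarrow> j' \<le> k \<Longrightarrow> i j \<le> i j'" for j j'
      using srt2 ll cS by (auto simp: i_def intro!: sorted_nth_mono)
    define chunk where "chunk a b = concat (take (b-a) (drop a ws))" for a b
    define P where "P a b = prod_list (map xs [a..<b])" for a b
    have chunk_run: "a \<le> b \<Longrightarrow> b \<le> m \<Longrightarrow> run_M delta (st a) (chunk a b) (P a b) (st b)" for a b
    proof (induction b rule: dec_induct)
      case base then show ?case by (simp add: chunk_def P_def run_M.nil)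
    next
      case (step b)
      then have bl: "b < m" by simp
      have "take (Suc b - a) (drop a ws) = take (b - a) (drop a ws) @ [ws ! b]"
        using step bl lws by (simp add: Suc_diff_le take_Suc_conv_app_nth)
      then have "chunk a (Suc b) = chunk a b @ ws ! b" by (simp add: chunk_def)
      moreover have "P a (Suc b) = P a b * xs b" using step by (simp add: P_def)
      moreover have "run_M delta (st b) (ws!b) (xs b) (st (Suc b))" using stp bl by blast
      ultimately show ?case using run_append[OF step.IH[OF less_imp_le[OF bl]]] by simp
    qed
    have chunk_app: "a \<le> b \<Longrightarrow> b \<le> c \<Longrightarrow> chunk a b @ chunk b c = chunk a c" for a b c
    proof -
      assume "a \<le> b" "b \<le> c"
      then have "c - a = (b - a) + (c - b)" by simp
      moreover have "drop (b - a) (drop a ws) = drop b ws" using \<open>a \<le> b\<close> by simp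
      ultimately show ?thesis unfolding chunk_def
        by (simp only: take_add concat_append)
    qed
    have P_mult: "a \<le> b \<Longrightarrow> b \<le> c \<Longrightarrow> P a b * P b c = P a c" for a b c
    proof -
      assume "a \<le> b" "b \<le> c"
      then have "[a..<c] = [a..<b] @ [b..<c]" using upt_add_eq_append[of a b "c-b"] by simp
      then show ?thesis unfolding P_def by simp
    qed
    define W where "W = (\<lambda>j. concat (take (i j - i (j - 1)) (drop (i (j - 1)) ws)))"
    define lam where "lam = concat (take (i 0) ws)"
    define mu where "mu = concat (drop (i k) ws)"
    define y where "y j = P (i (j - 1)) (i j)" for j
    have Wc: "W j = chunk (i (j - 1)) (i j)" for j by (simp add: W_def chunk_def)
    have lamc: "lam = chunk 0 (i 0)" by (simp add: lam_def chunk_def)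
    have muc: "mu = chunk (i k) m" using lws by (simp add: mu_def chunk_def)
    have mid: "j \<le> k \<Longrightarrow> concat (map W [1..<j+1]) = chunk (i 0) (i j) \<and> prod_list (map y [1..<j+1]) = P (i 0) (i j)" for j
    proof (induction j)
      case 0 then show ?case by (simp add: chunk_def P_def)
    next
      case (Suc j)
      have e: "[1..<Suc j+1] = [1..<j+1] @ [Suc j]" by simp
      have IH: "concat (map W [1..<j+1]) = chunk (i 0) (i j)" "prod_list (map y [1..<j+1]) = P (i 0) (i j)"
        using Suc by auto
      have "concat (map W [1..<Suc j+1]) = chunk (i 0) (i j) @ chunk (i j) (i (Suc j))"
        "prod_list (map y [1..<Suc j+1]) = P (i 0) (i j) * P (i j) (i (Suc j))"
        unfolding e using IH by (simp_all add: Wc y_def)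
      moreover have "i 0 \<le> i j" "i j \<le> i (Suc j)" using mono Suc by auto
      ultimately show ?case using chunk_app P_mult by simp
    qed
    have i0k: "i 0 \<le> i k" using mono by simp
    have ikm: "i k \<le> m" using iS by simp
    have m1: "concat (map W [1..<k+1]) = chunk (i 0) (i k)" "prod_list (map y [1..<k+1]) = P (i 0) (i k)"
      using mid[of k] by simp_all
    have c0m: "chunk 0 m = w" using wdef lws by (simp add: chunk_def)
    have "chunk 0 (i 0) @ chunk (i 0) (i k) @ chunk (i k) m = chunk 0 m"
      using chunk_app[of "i 0" "i k" m] chunk_app[of 0 "i 0" m] i0k ikm by simp
    then have weq: "w = lam @ concat (map W [1..<k+1]) @ mu"
      using m1 lamc muc c0m by simp
    have "P 0 (i 0) * (P (i 0) (i k) * P (i k) m) = P 0 m"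
      using P_mult[of "i 0" "i k" m] P_mult[of 0 "i 0" m] i0k ikm by simp
    then have xeq: "x = P 0 (i 0) * (prod_list (map y [1..<k+1]) * P (i k) m)"
      using m1 xdef by (simp add: P_def)
    from assms(2) obtain \<sigma> where sg: "\<sigma> permutes {1..k}" "\<sigma> \<noteq> id"
      and pe: "prod_list (map y [1..<k+1]) = prod_list (map (y \<circ> \<sigma>) [1..<k+1])"
      unfolding k_permutable_def by blast
    have loops: "\<forall>j\<in>set (map \<sigma> [1..<k+1]). run_M delta qq (W j) (y j) qq"
    proof
      fix j assume "j \<in> set (map \<sigma> [1..<k+1])"
      then have "j \<in> \<sigma> ` {1..<k+1}" by (simp only: set_map set_upt)
      then obtain j0 where "j0 \<in> {1..<k+1}" "j = \<sigma> j0" by blast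
      then have "j0 \<in> {1..k}" "j = \<sigma> j0" by auto
      then have j: "j \<in> {1..k}" using permutes_in_image[OF sg(1)] by blast
      then have "j - 1 \<le> k" "j \<le> k" "j - 1 \<le> j" by auto
      then have "i (j-1) \<le> i j" "st (i (j - 1)) = qq" "st (i j) = qq" "i j \<le> m"
        using mono iS by blast+
      then have "run_M delta (st (i (j-1))) (chunk (i (j-1)) (i j)) (P (i (j-1)) (i j)) (st (i j))"
        using chunk_run by blast
      then show "run_M delta qq (W j) (y j) qq" using \<open>st (i (j - 1)) = qq\<close> \<open>st (i j) = qq\<close>
        by (simp only: Wc y_def)
    qed
    have rmid: "run_M delta qq (concat (map (W \<circ> \<sigma>) [1..<k+1])) (prod_list (map (y \<circ> \<sigma>) [1..<k+1])) qq"
      using run_loops[OF loops] by (simp only: map_map)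
    have r1: "run_M delta q0 lam (P 0 (i 0)) qq" using chunk_run[of 0 "i 0"] lamc st0 iS by simp
    have r3: "run_M delta qq mu (P (i k) m) qf" using chunk_run[of "i k" m] muc stm iS by simp
    have rall: "run_M delta q0 (lam @ concat (map (W \<circ> \<sigma>) [1..<k+1]) @ mu) x qf"
      using run_append[OF r1 run_append[OF rmid r3]] unfolding xeq pe .
    have chs: "set (chunk a b) \<subseteq> set w" for a b
    proof -
      have "set (take (b-a) (drop a ws)) \<subseteq> set ws"
        by (meson order_trans set_drop_subset set_take_subset)
      then show ?thesis unfolding chunk_def wdef by auto
    qed
    have "set (concat (map (W \<circ> \<sigma>) [1..<k+1])) \<subseteq> set w"
      using chs unfolding Wc by auto
    then have "set (lam @ concat (map (W \<circ> \<sigma>) [1..<k+1]) @ mu) \<subseteq> set w"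
      using chs[of 0 "i 0"] chs[of "i k" m] unfolding lamc muc by auto
    then have "lam @ concat (map (W \<circ> \<sigma>) [1..<k+1]) @ mu \<in> lists Sig"
      using wS by (meson in_lists_conv_set subsetD)
    then have memL: "lam @ concat (map (W \<circ> \<sigma>) [1..<k+1]) @ mu \<in> L"
      using rall qf x0 unfolding LL rat_lang_def by blast
    then have fin: "w = lam @ concat (map W [1..<k+1]) @ mu \<and>
              (\<exists>\<sigma>. \<sigma> permutes {1..k} \<and> \<sigma> \<noteq> id \<and>
                   lam @ concat (map (W \<circ> \<sigma>) [1..<k+1]) @ mu \<in> L)"
      using weq sg by blast
    show "\<exists>i :: nat \<Rightarrow> nat. (\<forall>j < k. i j < i (Suc j)) \<and> i k \<le> m \<and>
          (let lam = concat (take (i 0) ws);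
               W = (\<lambda>j. concat (take (i j - i (j - 1)) (drop (i (j - 1)) ws)));
               mu = concat (drop (i k) ws)
           in w = lam @ concat (map W [1..<k+1]) @ mu \<and>
              (\<exists>\<sigma>. \<sigma> permutes {1..k} \<and> \<sigma> \<noteq> id \<and>
                   lam @ concat (map (W \<circ> \<sigma>) [1..<k+1]) @ mu \<in> L))"
    proof (rule exI[of _ i], intro conjI)
      show "\<forall>j<k. i j < i (Suc j)" by (rule inc)
      show "i k \<le> m" by (rule ikm)
      show "let lam = concat (take (i 0) ws);
               W = (\<lambda>j. concat (take (i j - i (j - 1)) (drop (i (j - 1)) ws)));
               mu = concat (drop (i k) ws)
           in w = lam @ concat (map W [1..<k+1]) @ mu \<and>
              (\<exists>\<sigma>. \<sigma> permutes {1..k} \<and> \<sigma> \<noteq> id \<and>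
                   lam @ concat (map (W \<circ> \<sigma>) [1..<k+1]) @ mu \<in> L)"
        unfolding Let_def apply (intro conjI exI[of _ \<sigma>])
        subgoal using weq unfolding W_def lam_def mu_def .
        subgoal by (rule sg(1))
        subgoal by (rule sg(2))
        subgoal using memL unfolding W_def lam_def mu_def .
        done
    qed
  qed
  show ?thesis
    apply (rule exI[of _ m])
    apply (rule conjI)
     apply (simp add: m_def)
    by (rule HH)
qed

end
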